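(* Let $\Sigma$ be a finite alphabet and $w\in\Sigma^\star$. If every symbol of $\Sigma$ occurs in $w$ more than $|\Sigma|$ times, then the answer to Disjoint Factors on $w$ is positive, i.e., there exist pairwise disjoint (contiguous) subwords $w_a$ of $w$, one for each $a\in\Sigma$, such that each $w_a$ has length at least $2$ and begins and ends with $a$. *)

theory Defs
  imports Main
begin

text \<open>A factor (contiguous subword) of w is given by positions i \<le> j, namely
  w!i, ..., w!j (i.e. take (j - i + 1) (drop i w)).\<close>

definition disjoint_factors :: "'a set \<Rightarrow> 'a list \<Rightarrow> bool" where
  "disjoint_factors \<Sigma> w \<longleftrightarrow>
     (\<exists>s e :: 'a \<Rightarrow> nat.
        (\<forall>a\<in>\<Sigma>. s a < e a \<and> e a < length w \<and> w ! s a = a \<and> w ! e a = a) \<and>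
        (\<forall>a\<in>\<Sigma>. \<forall>b\<in>\<Sigma>. a \<noteq> b \<longrightarrow> {s a..e a} \<inter> {s b..e b} = {}))"

end

theory Submission
  imports Defs
begin

lemma count_filter_eq: "P b \<Longrightarrow> count_list (filter P xs) b = count_list xs b"
  by (induction xs) auto

lemma count_distinct_le1: "distinct ys \<Longrightarrow> count_list ys b \<le> 1"
  by (induction ys) (auto simp: count_list_0_iff)

lemma distinct_filter_prefix:
  assumes "\<forall>l<j. l < length w \<longrightarrow> \<not> (w!l \<in> S \<and> w!l \<in> set (take l w))"
  shows "distinct (filter (\<lambda>x. x \<in> S) (take j w))"
  using assms
proof (induction j)
  case 0
  then show ?case by simp
next
  case (Suc j)
  show ?case
  proof (cases "j < length w")
    case True
    have t: "take (Suc j) w = take j w @ [w!j]" using True by (simp add: take_Suc_conv_app_nth)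
    have "distinct (filter (\<lambda>x. x \<in> S) (take j w))" using Suc by auto
    moreover have "w!j \<in> S \<longrightarrow> w!j \<notin> set (take j w)" using Suc.prems True by auto
    ultimately show ?thesis unfolding t by auto
  next
    case False
    then have "take (Suc j) w = take j w" by simp
    then show ?thesis using Suc by auto
  qed
qed

lemma gen:
  "finite \<Sigma> \<Longrightarrow> card \<Sigma> = n \<Longrightarrow> \<forall>a\<in>\<Sigma>. count_list w a > card \<Sigma> \<Longrightarrow> disjoint_factors \<Sigma> w"
proof (induction n arbitrary: \<Sigma> w)
  case 0
  then show ?case by (simp add: disjoint_factors_def)
next
  case (Suc n)
  define S where "S = \<Sigma>"
  define P where "P = (\<lambda>j. j < length w \<and> w!j \<in> \<Sigma> \<and> w!j \<in> set (take j w))"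
  have ex: "\<exists>j. P j"
  proof (rule ccontr)
    assume "\<not> (\<exists>j. P j)"
    then have "distinct (filter (\<lambda>x. x \<in> \<Sigma>) (take (length w) w))"
      by (intro distinct_filter_prefix) (auto simp: P_def)
    moreover obtain b where b: "b \<in> \<Sigma>" using Suc.prems by fastforce
    ultimately have "count_list w b \<le> 1"
      using count_distinct_le1[of "filter (\<lambda>x. x \<in> \<Sigma>) w" b] count_filter_eq[of "\<lambda>x. x \<in> \<Sigma>" b w] by simp
    then show False using Suc.prems b by fastforce
  qed
  define j where "j = (LEAST j. P j)"
  have Pj: "P j" using ex LeastI_ex j_def by metis
  have notP: "\<forall>l<j. \<not> P l" using j_def not_less_Least by blast
  define a where "a = w!j"
  have ja: "j < length w" "a \<in> \<Sigma>" "a \<in> set (take j w)" using Pj by (auto simp: P_def a_def)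
  obtain i where i: "i < j" "w!i = a"
    using ja(3) by (auto simp: in_set_conv_nth)
  have dist: "distinct (filter (\<lambda>x. x \<in> \<Sigma>) (take j w))"
    by (rule distinct_filter_prefix) (use notP in \<open>auto simp: P_def\<close>)
  define w' where "w' = drop (Suc j) w"
  define \<Sigma>' where "\<Sigma>' = \<Sigma> - {a}"
  have fin': "finite \<Sigma>'" using Suc.prems by (simp add: \<Sigma>'_def)
  have card': "card \<Sigma>' = n" using Suc.prems ja(2) by (simp add: \<Sigma>'_def)
  have cnt': "\<forall>b\<in>\<Sigma>'. count_list w' b > card \<Sigma>'"
  proof
    fix b assume b: "b \<in> \<Sigma>'"
    then have bS: "b \<in> \<Sigma>" "b \<noteq> a" by (auto simp: \<Sigma>'_def)
    have "count_list (take j w) b \<le> 1"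
      using count_distinct_le1[OF dist, of b] count_filter_eq[of "\<lambda>x. x \<in> \<Sigma>" b] bS by simp
    moreover have "take (Suc j) w = take j w @ [a]" using ja(1) a_def by (simp add: take_Suc_conv_app_nth)
    ultimately have "count_list (take (Suc j) w) b \<le> 1" using bS by simp
    moreover have "count_list w b = count_list (take (Suc j) w) b + count_list w' b"
      unfolding w'_def by (metis append_take_drop_id count_list_append)
    moreover have "count_list w b > Suc n" using Suc.prems bS by auto
    ultimately show "count_list w' b > card \<Sigma>'" using card' by linarith
  qed
  from Suc.IH[OF fin' card' cnt'] obtain s' e' where
    se': "\<forall>b\<in>\<Sigma>'. s' b < e' b \<and> e' b < length w' \<and> w' ! s' b = b \<and> w' ! e' b = b"
    "\<forall>b\<in>\<Sigma>'. \<forall>c\<in>\<Sigma>'. b \<noteq> c \<longrightarrow> {s' b..e' b} \<inter> {s' c..e' c} = {}"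
    unfolding disjoint_factors_def by blast
  define s where "s = (\<lambda>b. if b = a then i else s' b + Suc j)"
  define e where "e = (\<lambda>b. if b = a then j else e' b + Suc j)"
  have len': "length w' = length w - Suc j" by (simp add: w'_def)
  have A: "\<forall>b\<in>\<Sigma>. s b < e b \<and> e b < length w \<and> w ! s b = b \<and> w ! e b = b"
  proof
    fix b assume b: "b \<in> \<Sigma>"
    show "s b < e b \<and> e b < length w \<and> w ! s b = b \<and> w ! e b = b"
    proof (cases "b = a")
      case True
      then show ?thesis using i ja a_def by (simp add: s_def e_def)
    next
      case False
      then have "b \<in> \<Sigma>'" using b by (simp add: \<Sigma>'_def)
      then have h: "s' b < e' b" "e' b < length w'" "w' ! s' b = b" "w' ! e' b = b" using se' by auto
      have "w ! (s' b + Suc j) = b" using h ja(1) len' unfolding w'_def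
        by (simp add: add.commute)
      moreover have "w ! (e' b + Suc j) = b" using h ja(1) len' unfolding w'_def
        by (simp add: add.commute)
      ultimately show ?thesis using False h len' ja(1) by (simp add: s_def e_def)
    qed
  qed
  have B: "\<forall>b\<in>\<Sigma>. \<forall>c\<in>\<Sigma>. b \<noteq> c \<longrightarrow> {s b..e b} \<inter> {s c..e c} = {}"
  proof (intro ballI impI)
    fix b c assume bc: "b \<in> \<Sigma>" "c \<in> \<Sigma>" "b \<noteq> c"
    show "{s b..e b} \<inter> {s c..e c} = {}"
    proof (cases "b = a")
      case True
      then show ?thesis using bc by (auto simp: s_def e_def)
    next
      case False
      note bF = False
      show ?thesis
      proof (cases "c = a")
        case True
        then show ?thesis using bc by (auto simp: s_def e_def)
      next
        case False
        then have "b \<in> \<Sigma>'" "c \<in> \<Sigma>'" using bc bF by (auto simp: \<Sigma>'_def)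
        then have "{s' b..e' b} \<inter> {s' c..e' c} = {}" using se'(2) bc by blast
        then show ?thesis using False bF by (auto simp: s_def e_def)
      qed
    qed
  qed
  show ?case unfolding disjoint_factors_def using A B by blast
qed

theorem lemma32:
  fixes \<Sigma> :: "'a set" and w :: "'a list"
  assumes "finite \<Sigma>"
    and "set w \<subseteq> \<Sigma>"
    and "\<forall>a\<in>\<Sigma>. count_list w a > card \<Sigma>"
  shows "disjoint_factors \<Sigma> w"
  using gen assms by blast

end
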